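(* Let $\widehat{\mathscr{O}}$ be a commutative local principal ideal ring, complete with respect to its maximal ideal $\mathfrak{m}=(\pi)$, whose residue field $k$ has characteristic different from $2$. Let $A\in \mathrm{GL}_n(\widehat{\mathscr{O}})$ be cyclic, i.e. its reduction $\overline{A}\in\mathrm{M}_n(k)$ is a cyclic matrix. For $i\ge1$ let $\mathscr{O}_i=\widehat{\mathscr{O}}/\pi^i\widehat{\mathscr{O}}$ and let $A_i$ be the image of $A$ in $\mathrm{M}_n(\mathscr{O}_i)$. Then for every $j\in\mathbb N$, the null ideal $N^{\mathscr{O}_{j+1}}_{A_{j+1}}=\{G\in\mathscr{O}_{j+1}[t]:G(A_{j+1})=0\}$ is principal, generated by the characteristic polynomial $\chi(A_{j+1})(t)$ of $A_{j+1}$ (which is the reduction of the characteristic polynomial $\chi(A)(t)$ of $A$); moreover, $\chi(A_{j+1})(t)=\mathrm{Min}_{\mathscr{O}_{j+1},A_{j+1}}(t)$, i.e. $\chi(A_{j+1})(t)$ is the monic polynomial of least degree in $\mathscr{O}_{j+1}[t]$ annihilating $A_{j+1}$.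
   Context: A matrix $X\in\mathrm{M}_n(k)$ over a field is cyclic if $k^n$, viewed as a $k[t]$-module via $X$, is a cyclic module. A matrix over $\widehat{\mathscr O}$ is called cyclic if its reduction modulo $\mathfrak m$ is cyclic. $\mathrm{Min}_{\mathscr R,X}$ denotes the minimal (least-degree monic) annihilating polynomial of $X$ over $\mathscr R$. *)

theory Defs
  imports "Jordan_Normal_Form.Char_Poly"
begin

text \<open>All objects over the quotients O/(pi^i) and over the residue field k = O/(pi) are
  represented by lifts to O; equality in O/(pi^i) is divisibility of the difference by pi^i.\<close>

definition is_ideal :: "'a :: comm_ring_1 set \<Rightarrow> bool" where
  "is_ideal I \<longleftrightarrow> 0 \<in> I \<and> (\<forall>x\<in>I. \<forall>y\<in>I. x + y \<in> I) \<and> (\<forall>r. \<forall>x\<in>I. r * x \<in> I)"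

definition principal_ideal_ring :: "'a :: comm_ring_1 itself \<Rightarrow> bool" where
  "principal_ideal_ring _ \<longleftrightarrow> (\<forall>I :: 'a set. is_ideal I \<longrightarrow> (\<exists>a. I = {a * x | x. True}))"

text \<open>Local ring whose (unique) maximal ideal is (pi): pi is a non-unit and every
  non-unit lies in (pi), i.e. the non-units form exactly the ideal (pi).\<close>
definition local_with_max_ideal :: "'a :: comm_ring_1 \<Rightarrow> bool" where
  "local_with_max_ideal \<pi> \<longleftrightarrow> \<not> \<pi> dvd 1 \<and> (\<forall>x. \<not> x dvd 1 \<longrightarrow> \<pi> dvd x)"

definition adically_complete :: "'a :: comm_ring_1 \<Rightarrow> bool" where
  "adically_complete \<pi> \<longleftrightarrow>
     (\<forall>x :: nat \<Rightarrow> 'a.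
        (\<forall>k. \<exists>N. \<forall>m\<ge>N. \<forall>l\<ge>N. \<pi> ^ k dvd (x m - x l)) \<longrightarrow>
        (\<exists>y. \<forall>k. \<exists>N. \<forall>m\<ge>N. \<pi> ^ k dvd (y - x m)))"

definition poly_mat_eval :: "'a :: comm_ring_1 poly \<Rightarrow> 'a mat \<Rightarrow> 'a mat" where
  "poly_mat_eval p A = mat (dim_row A) (dim_col A)
     (\<lambda>(i, j). \<Sum>k\<le>degree p. coeff p k * (A ^\<^sub>m k) $$ (i, j))"

definition mat_cong :: "'a :: comm_ring_1 \<Rightarrow> 'a mat \<Rightarrow> 'a mat \<Rightarrow> bool" where
  "mat_cong q M N \<longleftrightarrow> dim_row M = dim_row N \<and> dim_col M = dim_col N \<and>
     (\<forall>i<dim_row M. \<forall>j<dim_col M. q dvd (M $$ (i, j) - N $$ (i, j)))"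

definition poly_cong :: "'a :: comm_ring_1 \<Rightarrow> 'a poly \<Rightarrow> 'a poly \<Rightarrow> bool" where
  "poly_cong q p r \<longleftrightarrow> (\<forall>i. q dvd (coeff p i - coeff r i))"

definition annihilates_mod :: "'a :: comm_ring_1 \<Rightarrow> 'a poly \<Rightarrow> 'a mat \<Rightarrow> bool" where
  "annihilates_mod q G A \<longleftrightarrow> mat_cong q (poly_mat_eval G A) (0\<^sub>m (dim_row A) (dim_col A))"

text \<open>The reduction of A mod pi (a matrix over the residue field k) is cyclic: k^n, viewed as a
  k[t]-module via the reduced matrix, is generated by (the reduction of) a single vector v.\<close>
definition cyclic_mod :: "'a :: comm_ring_1 \<Rightarrow> 'a mat \<Rightarrow> bool" where
  "cyclic_mod \<pi> A \<longleftrightarrow> (\<exists>v \<in> carrier_vec (dim_row A). \<forall>w \<in> carrier_vec (dim_row A).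
      \<exists>p. \<forall>i<dim_row A. \<pi> dvd ((poly_mat_eval p A *\<^sub>v v) $ i - w $ i))"

end

theory Submission
  imports Defs
begin

lemma pow_Suc_entry:
  assumes A: "A \<in> carrier_mat n n" and i: "i < n" and j: "j < n"
  shows "(A ^\<^sub>m Suc k) $$ (i,j) = (\<Sum>l<n. (A ^\<^sub>m k) $$ (i,l) * A $$ (l,j))"
  using A i j by (simp add: scalar_prod_def atLeast0LessThan)

lemma pow_0_entry:
  assumes A: "A \<in> carrier_mat n n" and i: "i < n" and j: "j < n"
  shows "(A ^\<^sub>m 0) $$ (i,j) = (if i = j then 1 else 0)"
  using A i j by simp

lemma ev_sum:
  assumes A: "A \<in> carrier_mat n n" and i: "i < n" and j: "j < n"
    and N: "\<forall>k\<ge>N. coeff p k = 0"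
  shows "poly_mat_eval p A $$ (i,j) = (\<Sum>k<N. coeff p k * (A ^\<^sub>m k) $$ (i,j))"
proof -
  let ?f = "\<lambda>k. coeff p k * (A ^\<^sub>m k) $$ (i,j)"
  let ?M = "max N (Suc (degree p))"
  have "poly_mat_eval p A $$ (i,j) = (\<Sum>k\<le>degree p. ?f k)"
    using A i j unfolding poly_mat_eval_def by simp
  also have "\<dots> = (\<Sum>k<?M. ?f k)"
    by (rule sum.mono_neutral_left) (auto simp: coeff_eq_0)
  also have "\<dots> = (\<Sum>k<N. ?f k)"
    by (rule sum.mono_neutral_right) (use N in auto)
  finally show ?thesis .
qed

lemma ev_add:
  assumes A: "A \<in> carrier_mat n n" and i: "i < n" and j: "j < n"
  shows "poly_mat_eval (p + q) A $$ (i,j) = poly_mat_eval p A $$ (i,j) + poly_mat_eval q A $$ (i,j)"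
proof -
  define N where "N = Suc (degree p + degree q)"
  have N1: "\<forall>k\<ge>N. coeff p k = 0" and N2: "\<forall>k\<ge>N. coeff q k = 0" and N3: "\<forall>k\<ge>N. coeff (p+q) k = 0"
    unfolding N_def by (auto simp: coeff_eq_0)
  show ?thesis unfolding ev_sum[OF A i j N1] ev_sum[OF A i j N2] ev_sum[OF A i j N3]
    by (simp add: sum.distrib algebra_simps)
qed

lemma ev_diff:
  assumes A: "A \<in> carrier_mat n n" and i: "i < n" and j: "j < n"
  shows "poly_mat_eval (p - q) A $$ (i,j) = poly_mat_eval p A $$ (i,j) - poly_mat_eval q A $$ (i,j)"
proof -
  define N where "N = Suc (degree p + degree q)"
  have N1: "\<forall>k\<ge>N. coeff p k = 0" and N2: "\<forall>k\<ge>N. coeff q k = 0" and N3: "\<forall>k\<ge>N. coeff (p-q) k = 0"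
    unfolding N_def by (auto simp: coeff_eq_0)
  show ?thesis unfolding ev_sum[OF A i j N1] ev_sum[OF A i j N2] ev_sum[OF A i j N3]
    by (simp add: sum_subtractf algebra_simps)
qed

lemma ev_smult:
  assumes A: "A \<in> carrier_mat n n" and i: "i < n" and j: "j < n"
  shows "poly_mat_eval (Polynomial.smult c p) A $$ (i,j) = c * poly_mat_eval p A $$ (i,j)"
proof -
  define N where "N = Suc (degree p)"
  have N1: "\<forall>k\<ge>N. coeff p k = 0" and N3: "\<forall>k\<ge>N. coeff (Polynomial.smult c p) k = 0"
    unfolding N_def by (auto simp: coeff_eq_0)
  show ?thesis unfolding ev_sum[OF A i j N1] ev_sum[OF A i j N3]
    by (simp add: sum_distrib_left algebra_simps)
qed

lemma ev_pCons0:
  assumes A: "A \<in> carrier_mat n n" and i: "i < n" and j: "j < n"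
  shows "poly_mat_eval (pCons 0 r) A $$ (i,j) = (\<Sum>l<n. poly_mat_eval r A $$ (i,l) * A $$ (l,j))"
proof -
  define N where "N = Suc (degree r)"
  have N1: "\<forall>k\<ge>N. coeff r k = 0" unfolding N_def by (auto simp: coeff_eq_0)
  have N2: "\<forall>k\<ge>Suc N. coeff (pCons 0 r) k = 0" using N1 by (auto simp: coeff_pCons split: nat.splits)
  have "poly_mat_eval (pCons 0 r) A $$ (i,j) = (\<Sum>k<Suc N. coeff (pCons 0 r) k * (A ^\<^sub>m k) $$ (i,j))"
    by (rule ev_sum[OF A i j N2])
  also have "\<dots> = (\<Sum>k<N. coeff r k * (A ^\<^sub>m Suc k) $$ (i,j))"
    by (subst sum.lessThan_Suc_shift) simp
  also have "\<dots> = (\<Sum>k<N. \<Sum>l<n. coeff r k * ((A ^\<^sub>m k) $$ (i,l) * A $$ (l,j)))"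
    by (rule sum.cong[OF refl]) (simp only: pow_Suc_entry[OF A i j] sum_distrib_left)
  also have "\<dots> = (\<Sum>l<n. \<Sum>k<N. coeff r k * (A ^\<^sub>m k) $$ (i,l) * A $$ (l,j))"
    by (subst sum.swap) (simp add: mult.assoc)
  also have "\<dots> = (\<Sum>l<n. poly_mat_eval r A $$ (i,l) * A $$ (l,j))"
    by (rule sum.cong[OF refl]) (simp add: ev_sum[OF A i _ N1] sum_distrib_right)
  finally show ?thesis .
qed

lemma ev_mult_zero:
  assumes A: "A \<in> carrier_mat n n"
    and Z: "\<And>i j. i < n \<Longrightarrow> j < n \<Longrightarrow> poly_mat_eval f A $$ (i,j) = 0"
  shows "i < n \<Longrightarrow> j < n \<Longrightarrow> poly_mat_eval (f * h) A $$ (i,j) = 0"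
proof (induction h arbitrary: i j)
  case 0
  then show ?case using ev_smult[OF A, of i j 0 f] by simp
next
  case (pCons a h)
  have "f * pCons a h = Polynomial.smult a f + pCons 0 (f * h)" by (simp add: mult_pCons_right)
  then show ?case using pCons ev_add[OF A] ev_smult[OF A] ev_pCons0[OF A] Z by simp
qed

lemma cayley_hamilton_entry:
  assumes A: "A \<in> carrier_mat n n" and i: "i < n" and j: "j < n"
  shows "poly_mat_eval (char_poly A) A $$ (i,j) = 0"
proof -
  define M where "M = char_poly_matrix A"
  define Adj where "Adj = adj_mat M"
  define \<chi> where "\<chi> = char_poly A"
  have M: "M \<in> carrier_mat n n" using A unfolding M_def by simp
  have Adj: "Adj \<in> carrier_mat n n" using adj_mat(1)[OF M] unfolding Adj_def .
  have Mentry: "M $$ (m,l) = (if m = l then [:0,1:] else 0) + [:- A $$ (m,l):]" if "m < n" "l < n" for m l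
    using that A unfolding M_def char_poly_matrix_def by simp
  have eq0: "(\<Sum>l<n. M $$ (m,l) * Adj $$ (l,j')) = (if m = j' then \<chi> else 0)" if "m < n" "j' < n" for m j'
  proof -
    have "(M * Adj) $$ (m,j') = (det M \<cdot>\<^sub>m 1\<^sub>m n) $$ (m,j')"
      using adj_mat(2)[OF M] unfolding Adj_def by simp
    then show ?thesis using that M Adj unfolding \<chi>_def char_poly_def M_def[symmetric]
      by (simp add: scalar_prod_def atLeast0LessThan)
  qed
  have eq1: "coeff (pCons 0 (Adj $$ (m,j'))) k - (\<Sum>l<n. A $$ (m,l) * coeff (Adj $$ (l,j')) k)
     = (if m = j' then coeff \<chi> k else 0)" if "m < n" "j' < n" for m j' k
  proof -
    have s1: "(\<Sum>l<n. (if m = l then [:0,1:] else 0) * Adj $$ (l,j')) = pCons 0 (Adj $$ (m,j'))"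
    proof -
      have "\<And>l. (if m = l then [:0,1:] else 0) * Adj $$ (l,j') = (if m = l then pCons 0 (Adj $$ (m,j')) else 0)"
        by auto
      then show ?thesis using that by (simp add: sum.delta)
    qed
    have "(\<Sum>l<n. M $$ (m,l) * Adj $$ (l,j')) = 
       (\<Sum>l<n. (if m = l then [:0,1:] else 0) * Adj $$ (l,j')) + (\<Sum>l<n. [:- A $$ (m,l):] * Adj $$ (l,j'))"
      unfolding sum.distrib[symmetric] by (rule sum.cong[OF refl]) (simp add: Mentry that distrib_right)
    also have "\<dots> = pCons 0 (Adj $$ (m,j')) + (\<Sum>l<n. Polynomial.smult (- A $$ (m,l)) (Adj $$ (l,j')))"
      unfolding s1 by simp
    finally have "coeff (\<Sum>l<n. M $$ (m,l) * Adj $$ (l,j')) k = coeff (pCons 0 (Adj $$ (m,j'))) k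
       - (\<Sum>l<n. A $$ (m,l) * coeff (Adj $$ (l,j')) k)"
      by (simp add: coeff_sum sum_negf)
    then show ?thesis using eq0[OF that] by (auto split: if_splits)
  qed
  define D where "D = Suc (degree \<chi> + (\<Sum>l<n. \<Sum>j'<n. degree (Adj $$ (l,j'))))"
  have degle: "degree (Adj $$ (l,j')) \<le> (\<Sum>l<n. \<Sum>j'<n. degree (Adj $$ (l,j')))" if "l < n" "j' < n" for l j'
  proof -
    have "degree (Adj $$ (l,j')) \<le> (\<Sum>j'<n. degree (Adj $$ (l,j')))"
      by (rule member_le_sum) (use that in auto)
    also have "\<dots> \<le> (\<Sum>l<n. \<Sum>j'<n. degree (Adj $$ (l,j')))"
      by (rule member_le_sum[where f = "\<lambda>l. \<Sum>j'<n. degree (Adj $$ (l,j'))"]) (use that in auto)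
    finally show ?thesis .
  qed
  have BD: "coeff (Adj $$ (l,j')) k = 0" if "l < n" "j' < n" "k \<ge> D" for l j' k
    using degle[OF that(1,2)] that(3) unfolding D_def by (intro coeff_eq_0) linarith
  have chiD: "\<forall>k\<ge>Suc D. coeff \<chi> k = 0" unfolding D_def by (auto simp: coeff_eq_0)
  define S where "S k = (\<Sum>m<n. (A ^\<^sub>m k) $$ (i,m) * coeff (pCons 0 (Adj $$ (m,j))) k)" for k
  have "poly_mat_eval \<chi> A $$ (i,j) = (\<Sum>k<Suc D. coeff \<chi> k * (A ^\<^sub>m k) $$ (i,j))"
    by (rule ev_sum[OF A i j chiD])
  also have "\<dots> = (\<Sum>k<Suc D. \<Sum>m<n. (A ^\<^sub>m k) $$ (i,m) * (if m = j then coeff \<chi> k else 0))"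
  proof (intro sum.cong refl)
    fix k
    have "\<And>m. (A ^\<^sub>m k) $$ (i,m) * (if m = j then coeff \<chi> k else 0) = (if m = j then coeff \<chi> k * (A ^\<^sub>m k) $$ (i,j) else 0)"
      by (cases "m = j") (simp_all add: mult.commute)
    then show "coeff \<chi> k * (A ^\<^sub>m k) $$ (i,j) = (\<Sum>m<n. (A ^\<^sub>m k) $$ (i,m) * (if m = j then coeff \<chi> k else 0))"
      using j by (simp only: sum.delta finite_lessThan lessThan_iff if_True)
  qed
  also have "\<dots> = (\<Sum>k<Suc D. \<Sum>m<n. (A ^\<^sub>m k) $$ (i,m) * (coeff (pCons 0 (Adj $$ (m,j))) k - (\<Sum>l<n. A $$ (m,l) * coeff (Adj $$ (l,j)) k)))"
    by (intro sum.cong refl, subst eq1[OF _ j, symmetric]) auto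
  also have "\<dots> = (\<Sum>k<Suc D. S k - S (Suc k))"
  proof (rule sum.cong[OF refl])
    fix k
    have "(\<Sum>m<n. (A ^\<^sub>m k) $$ (i,m) * (\<Sum>l<n. A $$ (m,l) * coeff (Adj $$ (l,j)) k))
        = (\<Sum>l<n. (\<Sum>m<n. (A ^\<^sub>m k) $$ (i,m) * A $$ (m,l)) * coeff (Adj $$ (l,j)) k)"
      by (simp only: sum_distrib_left sum_distrib_right mult.assoc) (rule sum.swap)
    also have "\<dots> = S (Suc k)"
      unfolding S_def by (rule sum.cong[OF refl]) (subst pow_Suc_entry[OF A i]; simp)
    finally have X: "(\<Sum>m<n. (A ^\<^sub>m k) $$ (i,m) * (\<Sum>l<n. A $$ (m,l) * coeff (Adj $$ (l,j)) k)) = S (Suc k)" .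
    have "(\<Sum>m<n. (A ^\<^sub>m k) $$ (i,m) * (coeff (pCons 0 (Adj $$ (m,j))) k - (\<Sum>l<n. A $$ (m,l) * coeff (Adj $$ (l,j)) k)))
       = S k - (\<Sum>m<n. (A ^\<^sub>m k) $$ (i,m) * (\<Sum>l<n. A $$ (m,l) * coeff (Adj $$ (l,j)) k))"
      unfolding S_def by (simp only: right_diff_distrib sum_subtractf)
    then show "(\<Sum>m<n. (A ^\<^sub>m k) $$ (i,m) * (coeff (pCons 0 (Adj $$ (m,j))) k - (\<Sum>l<n. A $$ (m,l) * coeff (Adj $$ (l,j)) k))) = S k - S (Suc k)"
      unfolding X .
  qed
  also have "\<dots> = S 0 - S (Suc D)" by (rule sum_lessThan_telescope')
  also have "\<dots> = 0" unfolding S_def using BD j by simp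
  finally show ?thesis unfolding \<chi>_def .
qed


definition kry :: "'a :: comm_ring_1 mat \<Rightarrow> 'a vec \<Rightarrow> nat \<Rightarrow> 'a mat" where
  "kry A v n = mat n n (\<lambda>(i,k). \<Sum>m<n. (A ^\<^sub>m k) $$ (i,m) * v $ m)"

lemma ev_carrier: "A \<in> carrier_mat n n \<Longrightarrow> poly_mat_eval p A \<in> carrier_mat n n"
  unfolding poly_mat_eval_def by simp

lemma mult_vec_entry:
  assumes "M \<in> carrier_mat n n" "v \<in> carrier_vec n" "i < n"
  shows "(M *\<^sub>v v) $ i = (\<Sum>m<n. M $$ (i,m) * v $ m)"
  using assms by (simp add: scalar_prod_def atLeast0LessThan)

lemma ev_vec_kry:
  assumes A: "A \<in> carrier_mat n n" and v: "v \<in> carrier_vec n" and i: "i < n"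
    and r: "\<forall>k\<ge>n. coeff r k = 0"
  shows "(poly_mat_eval r A *\<^sub>v v) $ i = (\<Sum>k<n. kry A v n $$ (i,k) * coeff r k)"
proof -
  have "(poly_mat_eval r A *\<^sub>v v) $ i = (\<Sum>m<n. poly_mat_eval r A $$ (i,m) * v $ m)"
    by (rule mult_vec_entry[OF ev_carrier[OF A] v i])
  also have "\<dots> = (\<Sum>m<n. \<Sum>k<n. coeff r k * (A ^\<^sub>m k) $$ (i,m) * v $ m)"
    by (rule sum.cong[OF refl]) (simp add: ev_sum[OF A i _ r] sum_distrib_right)
  also have "\<dots> = (\<Sum>k<n. \<Sum>m<n. coeff r k * (A ^\<^sub>m k) $$ (i,m) * v $ m)"
    by (rule sum.swap)
  also have "\<dots> = (\<Sum>k<n. kry A v n $$ (i,k) * coeff r k)"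
    unfolding kry_def using i
    by (intro sum.cong refl) (simp add: sum_distrib_right sum_distrib_left mult.commute mult.left_commute)
  finally show ?thesis .
qed

lemma prod_dvd_diff:
  fixes f g :: "nat \<Rightarrow> 'a :: comm_ring_1"
  assumes "finite S" "\<And>i. i \<in> S \<Longrightarrow> q dvd f i - g i"
  shows "q dvd prod f S - prod g S"
  using assms
proof (induction S rule: finite_induct)
  case empty then show ?case by simp
next
  case (insert x S)
  have "prod f (insert x S) - prod g (insert x S) = f x * (prod f S - prod g S) + (f x - g x) * prod g S"
    using insert by (simp add: algebra_simps)
  then show ?case using insert by (simp add: dvd_add dvd_mult dvd_mult2)
qed

lemma det_dvd_diff:
  assumes M: "M \<in> carrier_mat n n" and N: "N \<in> carrier_mat n n"
    and c: "\<And>i j. i < n \<Longrightarrow> j < n \<Longrightarrow> q dvd M $$ (i,j) - N $$ (i,j)"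
  shows "q dvd det M - det N"
proof -
  have "det M - det N = (\<Sum>p \<in> {p. p permutes {0 ..< n}}. signof p * ((\<Prod> i = 0 ..< n. M $$ (i, p i)) - (\<Prod> i = 0 ..< n. N $$ (i, p i))))"
    unfolding det_def'[OF M] det_def'[OF N] by (simp add: sum_subtractf right_diff_distrib)
  moreover have "q dvd (\<Sum>p \<in> {p. p permutes {0 ..< n}}. signof p * ((\<Prod> i = 0 ..< n. M $$ (i, p i)) - (\<Prod> i = 0 ..< n. N $$ (i, p i))))"
  proof (rule dvd_sum, rule dvd_mult, rule prod_dvd_diff)
    fix p i assume p: "p \<in> {p. p permutes {0 ..< n}}" and i: "i \<in> {0..<n}"
    then have "p i < n" using permutes_in_image[of p "{0..<n}" i] by auto
    then show "q dvd M $$ (i, p i) - N $$ (i, p i)" using c i by auto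
  qed simp
  ultimately show ?thesis by simp
qed


lemma kry_carrier: "kry A v n \<in> carrier_mat n n"
  unfolding kry_def by simp

lemma key:
  assumes A: "A \<in> carrier_mat n n" and v: "v \<in> carrier_vec n"
    and u: "u * det (kry A v n) = 1"
    and r: "\<forall>k\<ge>n. coeff r k = 0"
    and ann: "annihilates_mod q r A"
  shows "q dvd coeff r k"
proof (cases "k < n")
  case False
  then show ?thesis using r by simp
next
  case k: True
  define K where "K = kry A v n"
  define Adj where "Adj = adj_mat K"
  have K: "K \<in> carrier_mat n n" unfolding K_def by (rule kry_carrier)
  have Adj: "Adj \<in> carrier_mat n n" unfolding Adj_def using adj_mat(1)[OF K] .
  have inv: "(\<Sum>i<n. (u * Adj $$ (t,i)) * K $$ (i,k')) = (if t = k' then 1 else 0)" if "t < n" "k' < n" for t k'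
  proof -
    have "(Adj * K) $$ (t,k') = (det K \<cdot>\<^sub>m 1\<^sub>m n) $$ (t,k')"
      using adj_mat(3)[OF K] unfolding Adj_def by simp
    then have "(\<Sum>i<n. Adj $$ (t,i) * K $$ (i,k')) = det K * (if t = k' then 1 else 0)"
      using that K Adj by (simp add: scalar_prod_def atLeast0LessThan)
    then have "u * (\<Sum>i<n. Adj $$ (t,i) * K $$ (i,k')) = (if t = k' then 1 else 0)"
      using u unfolding K_def by (simp add: mult.assoc[symmetric])
    then show ?thesis by (simp add: sum_distrib_left mult.assoc)
  qed
  have ann': "q dvd poly_mat_eval r A $$ (i,m)" if "i < n" "m < n" for i m
    using ann that A unfolding annihilates_mod_def mat_cong_def poly_mat_eval_def by auto
  have w: "q dvd (poly_mat_eval r A *\<^sub>v v) $ i" if "i < n" for i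
    unfolding mult_vec_entry[OF ev_carrier[OF A] v that]
    by (rule dvd_sum) (simp add: ann' that dvd_mult2)
  have "coeff r k = (\<Sum>t<n. if k = t then coeff r t else 0)"
    using k by simp
  also have "\<dots> = (\<Sum>t<n. (if k = t then 1 else 0) * coeff r t)"
    by (intro sum.cong refl) simp
  also have "\<dots> = (\<Sum>t<n. (\<Sum>i<n. (u * Adj $$ (k,i)) * K $$ (i,t)) * coeff r t)"
    by (intro sum.cong refl) (simp add: inv k)
  also have "\<dots> = (\<Sum>i<n. (u * Adj $$ (k,i)) * (\<Sum>t<n. K $$ (i,t) * coeff r t))"
    by (simp only: sum_distrib_left sum_distrib_right mult.assoc) (rule sum.swap)
  also have "\<dots> = (\<Sum>i<n. (u * Adj $$ (k,i)) * (poly_mat_eval r A *\<^sub>v v) $ i)"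
    unfolding K_def by (intro sum.cong refl) (simp add: ev_vec_kry[OF A v _ r])
  also have "q dvd \<dots>"
    by (rule dvd_sum, rule dvd_mult, rule w) simp
  finally show ?thesis .
qed

lemma ev_vec_eq:
  assumes A: "A \<in> carrier_mat n n" and v: "v \<in> carrier_vec n" and i: "i < n"
    and e: "\<And>i m. i < n \<Longrightarrow> m < n \<Longrightarrow> poly_mat_eval p A $$ (i,m) = poly_mat_eval r A $$ (i,m)"
  shows "(poly_mat_eval p A *\<^sub>v v) $ i = (poly_mat_eval r A *\<^sub>v v) $ i"
  unfolding mult_vec_entry[OF ev_carrier[OF A] v i] using e i by simp

lemma monic_div:
  assumes A: "A \<in> carrier_mat n n"
  shows "\<exists>Q R. p = char_poly A * Q + R \<and> (\<forall>k\<ge>n. coeff R k = 0)"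
proof -
  have mon: "degree (char_poly A) = n" "coeff (char_poly A) n = 1"
    using degree_monic_char_poly[OF A] by auto
  then have nz: "char_poly A \<noteq> 0" by auto
  obtain Q R where qr: "pseudo_divmod p (char_poly A) = (Q,R)" by fastforce
  from pseudo_divmod(1)[OF nz qr] mon have "p = char_poly A * Q + R" by simp
  moreover from pseudo_divmod(2)[OF nz qr] mon have "\<forall>k\<ge>n. coeff R k = 0"
    by (auto simp: coeff_eq_0)
  ultimately show ?thesis by blast
qed

lemma ev_reduce:
  assumes A: "A \<in> carrier_mat n n" and i: "i < n" and m: "m < n"
  shows "poly_mat_eval (char_poly A * Q + R) A $$ (i,m) = poly_mat_eval R A $$ (i,m)"
  using ev_add[OF A i m] ev_mult_zero[OF A cayley_hamilton_entry[OF A] i m] by simp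

lemma krylov_unit:
  assumes A: "A \<in> carrier_mat n n" and loc: "local_with_max_ideal \<pi>" and cyc: "cyclic_mod \<pi> A"
  shows "\<exists>v\<in>carrier_vec n. det (kry A v n) dvd 1"
proof -
  from cyc A obtain v where v: "v \<in> carrier_vec n"
    and hv: "\<forall>w\<in>carrier_vec n. \<exists>p. \<forall>i<n. \<pi> dvd (poly_mat_eval p A *\<^sub>v v) $ i - w $ i"
    unfolding cyclic_mod_def by auto
  have "\<forall>t. \<exists>p. t < n \<longrightarrow> (\<forall>i<n. \<pi> dvd (poly_mat_eval p A *\<^sub>v v) $ i - unit_vec n t $ i)"
    using hv unit_vec_carrier by blast
  then obtain p where hp: "\<And>t i. t < n \<Longrightarrow> i < n \<Longrightarrow> \<pi> dvd (poly_mat_eval (p t) A *\<^sub>v v) $ i - unit_vec n t $ i"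
    by metis
  have "\<forall>t. \<exists>R. \<exists>Q. p t = char_poly A * Q + R \<and> (\<forall>k\<ge>n. coeff R k = 0)"
    using monic_div[OF A] by blast
  then obtain R where hR: "\<And>t. \<exists>Q. p t = char_poly A * Q + R t \<and> (\<forall>k\<ge>n. coeff (R t) k = 0)"
    by metis
  define C where "C = mat n n (\<lambda>(k,t). coeff (R t) k)"
  define K where "K = kry A v n"
  have K: "K \<in> carrier_mat n n" unfolding K_def by (rule kry_carrier)
  have C: "C \<in> carrier_mat n n" unfolding C_def by simp
  have cong: "\<pi> dvd (K * C) $$ (i,t) - 1\<^sub>m n $$ (i,t)" if i: "i < n" and t: "t < n" for i t
  proof -
    obtain Q where Q: "p t = char_poly A * Q + R t" and Rd: "\<forall>k\<ge>n. coeff (R t) k = 0" using hR by blast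
    have "(K * C) $$ (i,t) = (\<Sum>k<n. K $$ (i,k) * coeff (R t) k)"
      using K C i t unfolding C_def by (simp add: scalar_prod_def atLeast0LessThan)
    also have "\<dots> = (poly_mat_eval (R t) A *\<^sub>v v) $ i"
      unfolding K_def by (rule ev_vec_kry[OF A v i Rd, symmetric])
    also have "\<dots> = (poly_mat_eval (p t) A *\<^sub>v v) $ i"
      by (rule ev_vec_eq[OF A v i, symmetric]) (simp add: Q ev_reduce[OF A])
    finally show ?thesis using hp[OF t i] i t by simp
  qed
  have "\<pi> dvd det (K * C) - det (1\<^sub>m n)"
    by (rule det_dvd_diff[OF mult_carrier_mat[OF K C] one_carrier_mat]) (rule cong)
  then have d: "\<pi> dvd det K * det C - 1" using det_mult[OF K C] by simp
  have "det K dvd 1"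
  proof (rule ccontr)
    assume "\<not> det K dvd 1"
    then have "\<pi> dvd det K" using loc unfolding local_with_max_ideal_def by blast
    then have "\<pi> dvd det K * det C" by simp
    then have "\<pi> dvd 1" using dvd_diff[OF _ d] by fastforce
    then show False using loc unfolding local_with_max_ideal_def by blast
  qed
  then show ?thesis using v unfolding K_def by blast
qed


lemma ann_iff:
  assumes A: "A \<in> carrier_mat n n"
  shows "annihilates_mod q G A \<longleftrightarrow> (\<forall>i<n. \<forall>j<n. q dvd poly_mat_eval G A $$ (i,j))"
  using A unfolding annihilates_mod_def mat_cong_def by (auto simp: poly_mat_eval_def)

lemma ev_dvd:
  assumes A: "A \<in> carrier_mat n n" and i: "i < n" and j: "j < n"
    and d: "\<forall>k. q dvd coeff p k"
  shows "q dvd poly_mat_eval p A $$ (i,j)"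
proof -
  have N: "\<forall>k\<ge>Suc (degree p). coeff p k = 0" by (auto simp: coeff_eq_0)
  show ?thesis unfolding ev_sum[OF A i j N]
    by (rule dvd_sum, rule dvd_mult2) (use d in auto)
qed

theorem corollary2p3:
  fixes \<pi> :: "'a :: comm_ring_1" and A :: "'a mat" and n :: nat
  assumes pir: "principal_ideal_ring TYPE('a)"
    and loc: "local_with_max_ideal \<pi>"
    and compl: "adically_complete \<pi>"
    and char: "\<not> \<pi> dvd 2"
    and A: "A \<in> carrier_mat n n"
    and GL: "det A dvd 1"
    and cyc: "cyclic_mod \<pi> A"
  shows "\<forall>j::nat.
     (\<forall>G :: 'a poly. annihilates_mod (\<pi> ^ (j + 1)) G A \<longleftrightarrow>
         (\<exists>H. poly_cong (\<pi> ^ (j + 1)) G (char_poly A * H)))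
   \<and> monic (char_poly A) \<and> degree (char_poly A) = n
   \<and> annihilates_mod (\<pi> ^ (j + 1)) (char_poly A) A
   \<and> (\<forall>G :: 'a poly. monic G \<and> annihilates_mod (\<pi> ^ (j + 1)) G A \<longrightarrow> n \<le> degree G)
   \<and> (\<forall>G :: 'a poly. monic G \<and> degree G = n \<and> annihilates_mod (\<pi> ^ (j + 1)) G A
          \<longrightarrow> poly_cong (\<pi> ^ (j + 1)) G (char_poly A))"
proof (intro allI)
  fix j :: nat
  define q where "q = \<pi> ^ (j + 1)"
  define \<chi> where "\<chi> = char_poly A"
  obtain v where v: "v \<in> carrier_vec n" and dK: "det (kry A v n) dvd 1"
    using krylov_unit[OF A loc cyc] by blast
  obtain u where u: "u * det (kry A v n) = 1"
    using dK unfolding dvd_def by (metis mult.commute)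
  have CH: "poly_mat_eval \<chi> A $$ (i,k) = 0" if "i < n" "k < n" for i k
    unfolding \<chi>_def by (rule cayley_hamilton_entry[OF A that])
  have mon: "degree \<chi> = n" "coeff \<chi> n = 1"
    using degree_monic_char_poly[OF A] unfolding \<chi>_def by auto
  have mon': "monic \<chi>" using mon by simp
  have pq: "\<pi> dvd q" unfolding q_def by simp
  have keyq: "\<forall>k. q dvd coeff R k" if "\<forall>k\<ge>n. coeff R k = 0" "annihilates_mod q R A" for R
    using key[OF A v u that] by blast
  have P1: "annihilates_mod q G A \<longleftrightarrow> (\<exists>H. poly_cong q G (\<chi> * H))" for G
  proof
    assume ann: "annihilates_mod q G A"
    obtain Q R where GQR: "G = char_poly A * Q + R" and Rd: "\<forall>k\<ge>n. coeff R k = 0"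
      using monic_div[OF A] by blast
    have "annihilates_mod q R A"
      using ann unfolding ann_iff[OF A] using ev_reduce[OF A] GQR by metis
    then have "\<forall>k. q dvd coeff R k" using keyq Rd by blast
    then have "poly_cong q G (\<chi> * Q)"
      unfolding poly_cong_def GQR \<chi>_def by simp
    then show "\<exists>H. poly_cong q G (\<chi> * H)" by blast
  next
    assume "\<exists>H. poly_cong q G (\<chi> * H)"
    then obtain H where H: "poly_cong q G (\<chi> * H)" by blast
    show "annihilates_mod q G A"
      unfolding ann_iff[OF A]
    proof (intro allI impI)
      fix i k assume i: "i < n" and k: "k < n"
      have "poly_mat_eval (\<chi> * H) A $$ (i,k) = 0"
        by (rule ev_mult_zero[OF A CH i k])
      then have "poly_mat_eval G A $$ (i,k) = poly_mat_eval (G - \<chi> * H) A $$ (i,k)"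
        using ev_diff[OF A i k, of G "\<chi> * H"] by simp
      also have "q dvd \<dots>"
        by (rule ev_dvd[OF A i k]) (use H in \<open>simp add: poly_cong_def\<close>)
      finally show "q dvd poly_mat_eval G A $$ (i,k)" .
    qed
  qed
  have P3: "annihilates_mod q \<chi> A"
    unfolding ann_iff[OF A] using CH by simp
  have P4: "n \<le> degree G" if G: "monic G" "annihilates_mod q G A" for G
  proof (rule ccontr)
    assume "\<not> n \<le> degree G"
    then have "\<forall>k\<ge>n. coeff G k = 0" by (auto simp: coeff_eq_0)
    then have "q dvd coeff G (degree G)" using keyq G(2) by blast
    then have "\<pi> dvd 1" using G(1) pq dvd_trans by auto
    then show False using loc unfolding local_with_max_ideal_def by blast
  qed
  have P5: "poly_cong q G \<chi>" if G: "monic G" "degree G = n" "annihilates_mod q G A" for G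
  proof -
    have Rd: "\<forall>k\<ge>n. coeff (G - \<chi>) k = 0"
    proof (intro allI impI)
      fix k assume "n \<le> k"
      then show "coeff (G - \<chi>) k = 0"
        using G mon by (cases "k = n") (auto simp: coeff_eq_0)
    qed
    have "annihilates_mod q (G - \<chi>) A"
      using G(3) unfolding ann_iff[OF A] using ev_diff[OF A] CH by simp
    then have "\<forall>k. q dvd coeff (G - \<chi>) k" using keyq Rd by blast
    then show ?thesis unfolding poly_cong_def by simp
  qed
  show "(\<forall>G :: 'a poly. annihilates_mod (\<pi> ^ (j + 1)) G A \<longleftrightarrow>
         (\<exists>H. poly_cong (\<pi> ^ (j + 1)) G (char_poly A * H)))
   \<and> monic (char_poly A) \<and> degree (char_poly A) = n
   \<and> annihilates_mod (\<pi> ^ (j + 1)) (char_poly A) A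
   \<and> (\<forall>G :: 'a poly. monic G \<and> annihilates_mod (\<pi> ^ (j + 1)) G A \<longrightarrow> n \<le> degree G)
   \<and> (\<forall>G :: 'a poly. monic G \<and> degree G = n \<and> annihilates_mod (\<pi> ^ (j + 1)) G A
          \<longrightarrow> poly_cong (\<pi> ^ (j + 1)) G (char_poly A))"
    unfolding q_def[symmetric] \<chi>_def[symmetric]
    by (intro conjI allI impI) (use P1 P3 P4 P5 mon mon' in blast)+
qed

end
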